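(* Let $h=h_{\bar 0}\oplus h_{\bar 1}$, $J$, $P$, $q$ and $\tilde h=Ph$ be as described in the context. Let ${\cal A}_{SSR}$ be the self-dual canonical super commutation relations algebra over $h$ and ${\cal A}_{CSR}$ the canonical super commutation relations algebra over $\tilde h$, both as defined in the context. Then ${\cal A}_{SSR}$ and ${\cal A}_{CSR}$ are $\ast$-isomorphic.
   Context: $h_{\bar 0}$ (boson space) and $h_{\bar 1}$ (fermion space) are complex, infinite-dimensional, separable Hilbert spaces and $h=h_{\bar 0}\oplus h_{\bar 1}$ with scalar product $(\cdot,\cdot)$ (antilinear in the first argument). $P_\alpha$ ($\alpha\in\{\bar 0,\bar 1\}={\bf Z}_2$) is the orthogonal projection onto $h_\alpha$ and $\gamma=P_{\bar 0}-P_{\bar 1}$. A vector $f\in h_\alpha$ is homogeneous of degree $\mathrm{deg}(f)=\alpha$. For homogeneous elements $v,w$ of a ${\bf Z}_2$-graded algebra, $\langle v,w\rangle=\mathrm{deg}(v)\cdot\mathrm{deg}(w)$ and the supercommutator is $[v,w]_s=vw-(-1)^{\langle v,w\rangle}wv$, extended bilinearly. $J$ is an even conjugation on $h$ (antilinear, norm-preserving, $J^2=1$, $J\gamma=\gamma J$). $P$ is an orthogonal projection on $h$ commuting with $\gamma$ and satisfying $JP=(1-P)J$. Put $q=P-\gamma(1-P)$ and $\tilde h=Ph$ (a graded Hilbert space with $\tilde h_\alpha=P_\alpha\tilde h$); $\ast$ on vectors/operators denotes the Hilbert adjoint. ${\cal A}_{SSR}$ is the complex $\ast$-algebra generated by an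 identity ${\bf 1}$ and symbols $B^\dagger(f),B(f)$, $f\in h$, subject to the relations: $B^\dagger(c_1f_1+c_2f_2)=c_1B^\dagger(f_1)+c_2B^\dagger(f_2)$; $B^\dagger(f)=B(qf)^\ast$; $[B(f_1),B^\dagger(f_2)]_s=(f_1,f_2){\bf 1}$; $B(f)=B^\dagger(qJf)$; with grading $\mathrm{deg}(B^\dagger(f))=\mathrm{deg}(f)$ for homogeneous $f$. ${\cal A}_{CSR}$ is the complex $\ast$-algebra generated by an identity ${\bf 1}$ and symbols $a^\dagger(\tilde f),a(\tilde f)$, $\tilde f\in\tilde h$, subject to: $a^\dagger(c_1\tilde f_1+c_2\tilde f_2)=c_1a^\dagger(\tilde f_1)+c_2a^\dagger(\tilde f_2)$; $a^\dagger(\tilde f)=a(\tilde f)^\ast$; $[a(\tilde f_1),a^\dagger(\tilde f_2)]_s=(\tilde f_1,\tilde f_2){\bf 1}$; $[a(\tilde f_1),a(\tilde f_2)]_s=0$; with $\mathrm{deg}(a^\dagger(\tilde f))=\mathrm{deg}(\tilde f)$ for homogeneous $\tilde f$. *)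

theory Defs
  imports Complex_Main "HOL-Library.Countable_Set"
begin

text \<open>A complex vector space structure is given by a scalar multiplication
  smul on an abelian group 'h; ip is the scalar product, antilinear in the first argument.\<close>

definition hnorm :: "('h \<Rightarrow> 'h \<Rightarrow> complex) \<Rightarrow> 'h \<Rightarrow> real" where
  "hnorm ip x = sqrt (Re (ip x x))"

definition inner_product_space ::
  "(complex \<Rightarrow> 'h::ab_group_add \<Rightarrow> 'h) \<Rightarrow> ('h \<Rightarrow> 'h \<Rightarrow> complex) \<Rightarrow> bool" where
  "inner_product_space smul ip \<longleftrightarrow>
     vector_space smul \<and>
     (\<forall>x y z. ip x (y + z) = ip x y + ip x z) \<and>
     (\<forall>x y c. ip x (smul c y) = c * ip x y) \<and>
     (\<forall>x y. ip y x = cnj (ip x y)) \<and>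
     (\<forall>x. 0 \<le> Re (ip x x)) \<and>
     (\<forall>x. ip x x = 0 \<longrightarrow> x = 0)"

definition complete_ips :: "('h::ab_group_add \<Rightarrow> 'h \<Rightarrow> complex) \<Rightarrow> bool" where
  "complete_ips ip \<longleftrightarrow>
     (\<forall>s::nat \<Rightarrow> 'h.
        (\<forall>e>0. \<exists>N. \<forall>m\<ge>N. \<forall>n\<ge>N. hnorm ip (s m - s n) < e) \<longrightarrow>
        (\<exists>x. \<forall>e>0. \<exists>N. \<forall>n\<ge>N. hnorm ip (s n - x) < e))"

definition separable_subset :: "('h::ab_group_add \<Rightarrow> 'h \<Rightarrow> complex) \<Rightarrow> 'h set \<Rightarrow> bool" where
  "separable_subset ip H \<longleftrightarrow>
     (\<exists>D. countable D \<and> D \<subseteq> H \<and> (\<forall>x\<in>H. \<forall>e>0. \<exists>d\<in>D. hnorm ip (x - d) < e))"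

definition infinite_dim_subspace :: "(complex \<Rightarrow> 'h::ab_group_add \<Rightarrow> 'h) \<Rightarrow> 'h set \<Rightarrow> bool" where
  "infinite_dim_subspace smul H \<longleftrightarrow>
     module.subspace smul H \<and> (\<forall>S. finite S \<longrightarrow> S \<subseteq> H \<longrightarrow> \<not> H \<subseteq> module.span smul S)"

text \<open>h = h0 (+) h1: a complex Hilbert space which is the orthogonal direct sum of the
  separable infinite-dimensional closed subspaces H0 (bosons) and H1 (fermions).\<close>

definition graded_hilbert ::
  "(complex \<Rightarrow> 'h::ab_group_add \<Rightarrow> 'h) \<Rightarrow> ('h \<Rightarrow> 'h \<Rightarrow> complex) \<Rightarrow> 'h set \<Rightarrow> 'h set \<Rightarrow> bool" where
  "graded_hilbert smul ip H0 H1 \<longleftrightarrow>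
     inner_product_space smul ip \<and> complete_ips ip \<and>
     infinite_dim_subspace smul H0 \<and> infinite_dim_subspace smul H1 \<and>
     separable_subset ip H0 \<and> separable_subset ip H1 \<and>
     (\<forall>x\<in>H0. \<forall>y\<in>H1. ip x y = 0) \<and>
     (\<forall>x. \<exists>a\<in>H0. \<exists>b\<in>H1. x = a + b)"

definition proj0 :: "'h set \<Rightarrow> 'h set \<Rightarrow> 'h::ab_group_add \<Rightarrow> 'h" where
  "proj0 H0 H1 x = (THE a. a \<in> H0 \<and> x - a \<in> H1)"

definition gam :: "'h set \<Rightarrow> 'h set \<Rightarrow> 'h::ab_group_add \<Rightarrow> 'h" where
  "gam H0 H1 x = proj0 H0 H1 x - (x - proj0 H0 H1 x)"

definition even_conjugation ::
  "(complex \<Rightarrow> 'h::ab_group_add \<Rightarrow> 'h) \<Rightarrow> ('h \<Rightarrow> 'h \<Rightarrow> complex) \<Rightarrow> 'h set \<Rightarrow> 'h set \<Rightarrow> ('h \<Rightarrow> 'h) \<Rightarrow> bool" where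
  "even_conjugation smul ip H0 H1 J \<longleftrightarrow>
     (\<forall>x y. J (x + y) = J x + J y) \<and>
     (\<forall>c x. J (smul c x) = smul (cnj c) (J x)) \<and>
     (\<forall>x. hnorm ip (J x) = hnorm ip x) \<and>
     (\<forall>x. J (J x) = x) \<and>
     (\<forall>x. J (gam H0 H1 x) = gam H0 H1 (J x))"

definition even_orth_projection ::
  "(complex \<Rightarrow> 'h::ab_group_add \<Rightarrow> 'h) \<Rightarrow> ('h \<Rightarrow> 'h \<Rightarrow> complex) \<Rightarrow> 'h set \<Rightarrow> 'h set \<Rightarrow> ('h \<Rightarrow> 'h) \<Rightarrow> bool" where
  "even_orth_projection smul ip H0 H1 P \<longleftrightarrow>
     (\<forall>x y. P (x + y) = P x + P y) \<and>
     (\<forall>c x. P (smul c x) = smul c (P x)) \<and>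
     (\<forall>x. P (P x) = P x) \<and>
     (\<forall>x y. ip (P x) y = ip x (P y)) \<and>
     (\<forall>x. P (gam H0 H1 x) = gam H0 H1 (P x))"

definition qop :: "'h set \<Rightarrow> 'h set \<Rightarrow> ('h::ab_group_add \<Rightarrow> 'h) \<Rightarrow> 'h \<Rightarrow> 'h" where
  "qop H0 H1 P x = P x - gam H0 H1 (x - P x)"

text \<open>Homogeneous vectors: deg a, with False = even (bar 0), True = odd (bar 1).\<close>

definition homog :: "'h set \<Rightarrow> 'h set \<Rightarrow> bool \<Rightarrow> 'h \<Rightarrow> bool" where
  "homog H0 H1 a f \<longleftrightarrow> (if a then f \<in> H1 else f \<in> H0)"

definition ssign :: "bool \<Rightarrow> bool \<Rightarrow> complex" where
  "ssign a b = (if a \<and> b then -1 else 1)"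

text \<open>Elements are finitely supported functions from words to complex coefficients.
  A letter (g, False) is the generator g, a letter (g, True) is the formal adjoint g*.\<close>

type_synonym 'g fsa = "('g \<times> bool) list \<Rightarrow> complex"

definition fa_add :: "'g fsa \<Rightarrow> 'g fsa \<Rightarrow> 'g fsa" where
  "fa_add p q = (\<lambda>w. p w + q w)"

definition fa_smul :: "complex \<Rightarrow> 'g fsa \<Rightarrow> 'g fsa" where
  "fa_smul c p = (\<lambda>w. c * p w)"

definition fa_diff :: "'g fsa \<Rightarrow> 'g fsa \<Rightarrow> 'g fsa" where
  "fa_diff p q = (\<lambda>w. p w - q w)"

definition fa_zero :: "'g fsa" where
  "fa_zero = (\<lambda>w. 0)"

definition fa_one :: "'g fsa" where
  "fa_one = (\<lambda>w. if w = [] then 1 else 0)"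

definition fa_mult :: "'g fsa \<Rightarrow> 'g fsa \<Rightarrow> 'g fsa" where
  "fa_mult p q = (\<lambda>w. \<Sum>i\<le>length w. p (take i w) * q (drop i w))"

definition fa_star :: "'g fsa \<Rightarrow> 'g fsa" where
  "fa_star p = (\<lambda>w. cnj (p (rev (map (\<lambda>(g, b). (g, \<not> b)) w))))"

definition fa_gen :: "'g \<Rightarrow> 'g fsa" where
  "fa_gen g = (\<lambda>w. if w = [(g, False)] then 1 else 0)"

definition free_star_alg :: "'g set \<Rightarrow> 'g fsa set" where
  "free_star_alg G = {p. finite {w. p w \<noteq> 0} \<and> (\<forall>w. p w \<noteq> 0 \<longrightarrow> (\<forall>l\<in>set w. fst l \<in> G))}"

inductive_set star_ideal :: "'g set \<Rightarrow> 'g fsa set \<Rightarrow> 'g fsa set" for G R where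
  gen: "r \<in> R \<Longrightarrow> r \<in> star_ideal G R"
| zero: "fa_zero \<in> star_ideal G R"
| add: "x \<in> star_ideal G R \<Longrightarrow> y \<in> star_ideal G R \<Longrightarrow> fa_add x y \<in> star_ideal G R"
| smul: "x \<in> star_ideal G R \<Longrightarrow> fa_smul c x \<in> star_ideal G R"
| star: "x \<in> star_ideal G R \<Longrightarrow> fa_star x \<in> star_ideal G R"
| multl: "x \<in> star_ideal G R \<Longrightarrow> a \<in> free_star_alg G \<Longrightarrow> fa_mult a x \<in> star_ideal G R"
| multr: "x \<in> star_ideal G R \<Longrightarrow> a \<in> free_star_alg G \<Longrightarrow> fa_mult x a \<in> star_ideal G R"

text \<open>The quotient *-algebras free_star_alg G1 / I1 and free_star_alg G2 / I2 are
  *-isomorphic: there is a map Phi on representatives inducing a well-defined, bijective,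
  unital, linear, multiplicative and *-preserving map of the quotients.
  (Congruence mod I is  p ~ q  iff  p - q in I.)\<close>

definition quot_star_isomorphic ::
  "'g set \<Rightarrow> 'g fsa set \<Rightarrow> 'k set \<Rightarrow> 'k fsa set \<Rightarrow> bool" where
  "quot_star_isomorphic G1 I1 G2 I2 \<longleftrightarrow>
    (\<exists>\<Phi>. (\<forall>x\<in>free_star_alg G1. \<Phi> x \<in> free_star_alg G2) \<and>
         (\<forall>x\<in>free_star_alg G1. \<forall>y\<in>free_star_alg G1.
             fa_diff (\<Phi> (fa_add x y)) (fa_add (\<Phi> x) (\<Phi> y)) \<in> I2) \<and>
         (\<forall>c. \<forall>x\<in>free_star_alg G1. fa_diff (\<Phi> (fa_smul c x)) (fa_smul c (\<Phi> x)) \<in> I2) \<and>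
         (\<forall>x\<in>free_star_alg G1. \<forall>y\<in>free_star_alg G1.
             fa_diff (\<Phi> (fa_mult x y)) (fa_mult (\<Phi> x) (\<Phi> y)) \<in> I2) \<and>
         (\<forall>x\<in>free_star_alg G1. fa_diff (\<Phi> (fa_star x)) (fa_star (\<Phi> x)) \<in> I2) \<and>
         fa_diff (\<Phi> fa_one) fa_one \<in> I2 \<and>
         (\<forall>x\<in>free_star_alg G1. \<Phi> x \<in> I2 \<longleftrightarrow> x \<in> I1) \<and>
         (\<forall>y\<in>free_star_alg G2. \<exists>x\<in>free_star_alg G1. fa_diff (\<Phi> x) y \<in> I2))"

datatype 'h cgen = Cr 'h | An 'h  \<comment> \<open>Cr f = B^dagger(f) resp. a^dagger(f); An f = B(f) resp. a(f)\<close>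

definition ssr_relations ::
  "(complex \<Rightarrow> 'h::ab_group_add \<Rightarrow> 'h) \<Rightarrow> ('h \<Rightarrow> 'h \<Rightarrow> complex) \<Rightarrow> 'h set \<Rightarrow> 'h set
   \<Rightarrow> ('h \<Rightarrow> 'h) \<Rightarrow> ('h \<Rightarrow> 'h) \<Rightarrow> 'h cgen fsa set" where
  "ssr_relations smul ip H0 H1 J P =
     {fa_diff (fa_gen (Cr (smul c1 f1 + smul c2 f2)))
              (fa_add (fa_smul c1 (fa_gen (Cr f1))) (fa_smul c2 (fa_gen (Cr f2)))) | c1 c2 f1 f2. True}
   \<union> {fa_diff (fa_gen (Cr f)) (fa_star (fa_gen (An (qop H0 H1 P f)))) | f. True}
   \<union> {fa_diff (fa_diff (fa_mult (fa_gen (An f1)) (fa_gen (Cr f2)))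
                       (fa_smul (ssign a b) (fa_mult (fa_gen (Cr f2)) (fa_gen (An f1)))))
              (fa_smul (ip f1 f2) fa_one) | a b f1 f2. homog H0 H1 a f1 \<and> homog H0 H1 b f2}
   \<union> {fa_diff (fa_gen (An f)) (fa_gen (Cr (qop H0 H1 P (J f)))) | f. True}"

definition csr_gens :: "('h \<Rightarrow> 'h) \<Rightarrow> 'h cgen set" where
  "csr_gens P = {Cr f | f. f \<in> range P} \<union> {An f | f. f \<in> range P}"

definition csr_relations ::
  "(complex \<Rightarrow> 'h::ab_group_add \<Rightarrow> 'h) \<Rightarrow> ('h \<Rightarrow> 'h \<Rightarrow> complex) \<Rightarrow> 'h set \<Rightarrow> 'h set
   \<Rightarrow> ('h \<Rightarrow> 'h) \<Rightarrow> 'h cgen fsa set" where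
  "csr_relations smul ip H0 H1 P =
     {fa_diff (fa_gen (Cr (smul c1 f1 + smul c2 f2)))
              (fa_add (fa_smul c1 (fa_gen (Cr f1))) (fa_smul c2 (fa_gen (Cr f2))))
        | c1 c2 f1 f2. f1 \<in> range P \<and> f2 \<in> range P}
   \<union> {fa_diff (fa_gen (Cr f)) (fa_star (fa_gen (An f))) | f. f \<in> range P}
   \<union> {fa_diff (fa_diff (fa_mult (fa_gen (An f1)) (fa_gen (Cr f2)))
                       (fa_smul (ssign a b) (fa_mult (fa_gen (Cr f2)) (fa_gen (An f1)))))
              (fa_smul (ip f1 f2) fa_one)
        | a b f1 f2. f1 \<in> range P \<and> f2 \<in> range P \<and> homog H0 H1 a f1 \<and> homog H0 H1 b f2}
   \<union> {fa_diff (fa_mult (fa_gen (An f1)) (fa_gen (An f2)))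
              (fa_smul (ssign a b) (fa_mult (fa_gen (An f2)) (fa_gen (An f1))))
        | a b f1 f2. f1 \<in> range P \<and> f2 \<in> range P \<and> homog H0 H1 a f1 \<and> homog H0 H1 b f2}"

end

theory Submission
  imports Defs "HOL-Library.Function_Algebras"
begin


section \<open>Algebra of formal series on words\<close>

definition supp :: "'g fsa \<Rightarrow> ('g \<times> bool) list set" where
  "supp p = {w. p w \<noteq> 0}"

definition mon :: "('g \<times> bool) list \<Rightarrow> 'g fsa" where
  "mon u = (\<lambda>v. if v = u then 1 else 0)"

definition flip :: "('g \<times> bool) list \<Rightarrow> ('g \<times> bool) list" where
  "flip w = rev (map (\<lambda>(g, b). (g, \<not> b)) w)"

definition splits :: "'a list \<Rightarrow> ('a list \<times> 'a list) set" where
  "splits w = {(u, v). u @ v = w}"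

lemma flip_flip[simp]: "flip (flip w) = w"
  by (induct w) (auto simp: flip_def rev_map case_prod_beta)

lemma flip_append[simp]: "flip (u @ v) = flip v @ flip u"
  by (simp add: flip_def)

lemma flip_Nil[simp]: "flip [] = []" by (simp add: flip_def)

lemma flip_inj: "flip u = flip v \<longleftrightarrow> u = v"
  by (metis flip_flip)

lemma splits_eq: "splits w = (\<lambda>i. (take i w, drop i w)) ` {..length w}"
proof -
  have "(u, v) \<in> (\<lambda>i. (take i w, drop i w)) ` {..length w}" if "u @ v = w" for u v
    using that by (auto intro!: image_eqI[where x="length u"])
  then show ?thesis unfolding splits_def by auto
qed

lemma finite_splits[simp]: "finite (splits w)"
  unfolding splits_eq by simp

lemma fa_mult_alt: "fa_mult p q w = (\<Sum>(u, v)\<in>splits w. p u * q v)"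
proof -
  have inj: "inj_on (\<lambda>i. (take i w, drop i w)) {..length w}"
    by (auto simp: inj_on_def) (metis length_take min.absorb2)
  show ?thesis
    unfolding splits_eq fa_mult_def by (simp add: sum.reindex[OF inj])
qed

lemma fa_mult_alt': "fa_mult p q w = (\<Sum>s\<in>splits w. p (fst s) * q (snd s))"
  by (simp add: fa_mult_alt case_prod_beta)

lemma flip_eq_iff: "flip w = u \<longleftrightarrow> w = flip u"
  by (metis flip_flip)

lemma append_eq_flip: "u @ v = flip w \<longleftrightarrow> flip v @ flip u = w"
  by (metis flip_append flip_flip)

lemma sum_fun_apply: "(\<Sum>i\<in>I. f i) x = (\<Sum>i\<in>I. f i x)"
  by (induct I rule: infinite_finite_induct) auto

lemma lam_plus: "(\<lambda>a. f a + g a) = f + g" by (simp add: plus_fun_def)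
lemma lam_minus: "(\<lambda>a. f a - g a) = f - g" by (simp add: fun_diff_def)
lemma lam_zero: "(\<lambda>a. 0) = 0" by (simp add: zero_fun_def)

lemma fa_add_eq: "fa_add p q = p + q" by (auto simp: fa_add_def)
lemma fa_zero_eq: "fa_zero = 0" by (auto simp: fa_zero_def)
lemma fa_diff_eq: "fa_diff p q = p - q" by (auto simp: fa_diff_def)

lemma fa_mult_assoc: "fa_mult (fa_mult p q) r = fa_mult p (fa_mult q r)"
proof
  fix w
  have "fa_mult (fa_mult p q) r w =
        (\<Sum>xz\<in>splits w. \<Sum>uv\<in>splits (fst xz). p (fst uv) * q (snd uv) * r (snd xz))"
    by (simp add: fa_mult_alt' sum_distrib_right)
  also have "\<dots> = (\<Sum>t\<in>Sigma (splits w) (\<lambda>xz. splits (fst xz)).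
        p (fst (snd t)) * q (snd (snd t)) * r (snd (fst t)))"
    by (subst sum.Sigma) (auto simp: case_prod_beta)
  also have "\<dots> = (\<Sum>t\<in>Sigma (splits w) (\<lambda>uy. splits (snd uy)).
        p (fst (fst t)) * (q (fst (snd t)) * r (snd (snd t))))"
    by (rule sum.reindex_bij_witness[where i="\<lambda>t. ((fst (fst t) @ fst (snd t), snd (snd t)), (fst (fst t), fst (snd t)))"
          and j="\<lambda>t. ((fst (snd t), snd (snd t) @ snd (fst t)), (snd (snd t), snd (fst t)))"])
       (auto simp: splits_def)
  also have "\<dots> = (\<Sum>uy\<in>splits w. \<Sum>vz\<in>splits (snd uy). p (fst uy) * (q (fst vz) * r (snd vz)))"
    by (subst sum.Sigma) (auto simp: case_prod_beta)
  also have "\<dots> = fa_mult p (fa_mult q r) w"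
    by (simp add: fa_mult_alt' sum_distrib_left)
  finally show "fa_mult (fa_mult p q) r w = fa_mult p (fa_mult q r) w" .
qed

lemma fa_star_mult: "fa_star (fa_mult p q) = fa_mult (fa_star q) (fa_star p)"
proof
  fix w
  have "fa_star (fa_mult p q) w = (\<Sum>s\<in>splits (flip w). cnj (p (fst s)) * cnj (q (snd s)))"
    by (simp add: fa_star_def fa_mult_alt' flip_def[symmetric])
  also have "\<dots> = (\<Sum>s\<in>splits w. cnj (q (flip (fst s))) * cnj (p (flip (snd s))))"
    by (rule sum.reindex_bij_witness[where i="\<lambda>s. (flip (snd s), flip (fst s))"
          and j="\<lambda>s. (flip (snd s), flip (fst s))"]) (auto simp: splits_def append_eq_flip)
  also have "\<dots> = fa_mult (fa_star q) (fa_star p) w"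
    by (simp add: fa_star_def fa_mult_alt' flip_def[symmetric])
  finally show "fa_star (fa_mult p q) w = fa_mult (fa_star q) (fa_star p) w" .
qed

lemma fa_star_star[simp]: "fa_star (fa_star p) = p"
  by (auto simp: fa_star_def flip_def[symmetric])

lemma fa_mult_mon: "fa_mult (mon u) (mon v) = mon (u @ v)"
proof
  fix w
  have "fa_mult (mon u) (mon v) w = (\<Sum>s\<in>splits w. if s = (u, v) then 1 else 0)"
    unfolding fa_mult_alt' by (rule sum.cong) (auto simp: mon_def prod_eq_iff)
  also have "\<dots> = mon (u @ v) w"
    by (subst sum.delta[OF finite_splits]) (auto simp: mon_def splits_def)
  finally show "fa_mult (mon u) (mon v) w = mon (u @ v) w" .
qed

lemma fa_one_mon: "fa_one = mon []" by (auto simp: fa_one_def mon_def)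
lemma fa_gen_mon: "fa_gen g = mon [(g, False)]" by (auto simp: fa_gen_def mon_def)

lemma fa_mult_one_left[simp]: "fa_mult fa_one p = p"
proof
  fix w
  have "fa_mult fa_one p w = (\<Sum>s\<in>splits w. if s = ([], w) then p (snd s) else 0)"
    unfolding fa_mult_alt' by (rule sum.cong) (auto simp: fa_one_def splits_def prod_eq_iff)
  also have "\<dots> = p w"
    by (subst sum.delta[OF finite_splits]) (auto simp: splits_def)
  finally show "fa_mult fa_one p w = p w" .
qed

lemma fa_mult_one_right[simp]: "fa_mult p fa_one = p"
proof
  fix w
  have "fa_mult p fa_one w = (\<Sum>s\<in>splits w. if s = (w, []) then p (fst s) else 0)"
    unfolding fa_mult_alt' by (rule sum.cong) (auto simp: fa_one_def splits_def prod_eq_iff)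
  also have "\<dots> = p w"
    by (subst sum.delta[OF finite_splits]) (auto simp: splits_def)
  finally show "fa_mult p fa_one w = p w" .
qed

lemma fa_star_flip: "fa_star p w = cnj (p (flip w))"
  by (simp add: fa_star_def flip_def)

lemma fa_star_mon: "fa_star (mon u) = mon (flip u)"
  by (rule ext) (auto simp: fa_star_flip mon_def flip_eq_iff)

lemma fa_star_one[simp]: "fa_star fa_one = fa_one"
  by (simp add: fa_one_mon fa_star_mon)

lemma fa_mult_add_left: "fa_mult (p + q) r = fa_mult p r + fa_mult q r"
  by (auto simp: fa_mult_def sum.distrib algebra_simps)
lemma fa_mult_add_right: "fa_mult r (p + q) = fa_mult r p + fa_mult r q"
  by (auto simp: fa_mult_def sum.distrib algebra_simps)
lemma fa_mult_diff_left: "fa_mult (p - q) r = fa_mult p r - fa_mult q r"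
  by (auto simp: fa_mult_def sum_subtractf algebra_simps)
lemma fa_mult_diff_right: "fa_mult r (p - q) = fa_mult r p - fa_mult r q"
  by (auto simp: fa_mult_def sum_subtractf algebra_simps)
lemma fa_mult_smul_left: "fa_mult (fa_smul c p) r = fa_smul c (fa_mult p r)"
  by (auto simp: fa_mult_def fa_smul_def sum_distrib_left algebra_simps)
lemma fa_mult_smul_right: "fa_mult r (fa_smul c p) = fa_smul c (fa_mult r p)"
  by (auto simp: fa_mult_def fa_smul_def sum_distrib_left algebra_simps)
lemma fa_mult_zero_left[simp]: "fa_mult 0 r = 0"
  by (auto simp: fa_mult_def)
lemma fa_mult_zero_right[simp]: "fa_mult r 0 = 0"
  by (auto simp: fa_mult_def)
lemma fa_mult_sum_left: "fa_mult (\<Sum>i\<in>I. f i) r = (\<Sum>i\<in>I. fa_mult (f i) r)"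
proof (rule ext)
  fix w show "fa_mult (\<Sum>i\<in>I. f i) r w = (\<Sum>i\<in>I. fa_mult (f i) r) w"
    unfolding fa_mult_def sum_fun_apply sum_distrib_right by (rule sum.swap)
qed
lemma fa_mult_sum_right: "fa_mult r (\<Sum>i\<in>I. f i) = (\<Sum>i\<in>I. fa_mult r (f i))"
proof (rule ext)
  fix w show "fa_mult r (\<Sum>i\<in>I. f i) w = (\<Sum>i\<in>I. fa_mult r (f i)) w"
    unfolding fa_mult_def sum_fun_apply sum_distrib_left by (rule sum.swap)
qed

lemma fa_star_add: "fa_star (p + q) = fa_star p + fa_star q"
  by (auto simp: fa_star_def)
lemma fa_star_diff: "fa_star (p - q) = fa_star p - fa_star q"
  by (auto simp: fa_star_def)
lemma fa_star_zero[simp]: "fa_star 0 = 0"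
  by (auto simp: fa_star_def)
lemma fa_star_smul: "fa_star (fa_smul c p) = fa_smul (cnj c) (fa_star p)"
  by (auto simp: fa_star_def fa_smul_def)
lemma fa_star_sum: "fa_star (\<Sum>i\<in>I. f i) = (\<Sum>i\<in>I. fa_star (f i))"
  by (rule ext) (simp add: fa_star_def sum_fun_apply)

lemma fa_smul_add: "fa_smul c (p + q) = fa_smul c p + fa_smul c q"
  by (auto simp: fa_smul_def algebra_simps)
lemma fa_smul_diff: "fa_smul c (p - q) = fa_smul c p - fa_smul c q"
  by (auto simp: fa_smul_def algebra_simps)
lemma fa_smul_sum: "fa_smul c (\<Sum>i\<in>I. f i) = (\<Sum>i\<in>I. fa_smul c (f i))"
  by (rule ext) (simp add: fa_smul_def sum_fun_apply sum_distrib_left)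
lemma fa_smul_smul: "fa_smul c (fa_smul d p) = fa_smul (c * d) p"
  by (auto simp: fa_smul_def)
lemma fa_smul_zero[simp]: "fa_smul c 0 = 0" "fa_smul 0 p = 0"
  by (auto simp: fa_smul_def)
lemma fa_smul_one[simp]: "fa_smul 1 p = p"
  by (auto simp: fa_smul_def)


definition W :: "'g set \<Rightarrow> ('g \<times> bool) list set" where
  "W G = {w. \<forall>l\<in>set w. fst l \<in> G}"

lemma W_append[simp]: "u @ v \<in> W G \<longleftrightarrow> u \<in> W G \<and> v \<in> W G"
  by (auto simp: W_def)
lemma W_flip[simp]: "flip w \<in> W G \<longleftrightarrow> w \<in> W G"
  by (auto simp: W_def flip_def)
lemma W_Cons[simp]: "l # w \<in> W G \<longleftrightarrow> fst l \<in> G \<and> w \<in> W G"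
  by (auto simp: W_def)
lemma W_Nil[simp]: "[] \<in> W G"
  by (auto simp: W_def)
lemma W_UNIV[simp]: "w \<in> W UNIV"
  by (auto simp: W_def)

lemma fsa_iff: "p \<in> free_star_alg G \<longleftrightarrow> finite (supp p) \<and> supp p \<subseteq> W G"
  by (auto simp: free_star_alg_def supp_def W_def)

lemma fsa_supp_sub: "supp q \<subseteq> S \<Longrightarrow> finite S \<Longrightarrow> S \<subseteq> W G \<Longrightarrow> q \<in> free_star_alg G"
  unfolding fsa_iff by (auto intro: finite_subset)

lemma supp_add: "supp (p + q) \<subseteq> supp p \<union> supp q" by (auto simp: supp_def)
lemma supp_diff: "supp (p - q) \<subseteq> supp p \<union> supp q" by (auto simp: supp_def)
lemma supp_smul: "supp (fa_smul c p) \<subseteq> supp p" by (auto simp: supp_def fa_smul_def)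
lemma supp_zero[simp]: "supp 0 = {}" by (auto simp: supp_def)
lemma supp_mon[simp]: "supp (mon w) = {w}" by (auto simp: supp_def mon_def)
lemma supp_star: "supp (fa_star p) = flip ` supp p"
  by (auto simp: supp_def fa_star_flip image_iff) (metis flip_flip)
lemma supp_mult: "supp (fa_mult p q) \<subseteq> (\<lambda>s. fst s @ snd s) ` (supp p \<times> supp q)"
proof
  fix w assume "w \<in> supp (fa_mult p q)"
  then have "(\<Sum>s\<in>splits w. p (fst s) * q (snd s)) \<noteq> 0"
    by (simp add: supp_def fa_mult_alt')
  then obtain s where "s \<in> splits w" "p (fst s) * q (snd s) \<noteq> 0"
    by (meson sum.not_neutral_contains_not_neutral)
  then show "w \<in> (\<lambda>s. fst s @ snd s) ` (supp p \<times> supp q)"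
    by (auto simp: supp_def splits_def intro!: image_eqI[where x=s])
qed
lemma supp_sum: "supp (\<Sum>i\<in>I. f i) \<subseteq> (\<Union>i\<in>I. supp (f i))"
proof
  fix w assume "w \<in> supp (\<Sum>i\<in>I. f i)"
  then have "(\<Sum>i\<in>I. f i w) \<noteq> 0" by (simp add: supp_def sum_fun_apply)
  then obtain i where "i \<in> I" "f i w \<noteq> 0"
    by (meson sum.not_neutral_contains_not_neutral)
  then show "w \<in> (\<Union>i\<in>I. supp (f i))" by (auto simp: supp_def)
qed

lemma fsa_add: "p \<in> free_star_alg G \<Longrightarrow> q \<in> free_star_alg G \<Longrightarrow> p + q \<in> free_star_alg G"
  by (rule fsa_supp_sub[OF supp_add]) (auto simp: fsa_iff)
lemma fsa_diff: "p \<in> free_star_alg G \<Longrightarrow> q \<in> free_star_alg G \<Longrightarrow> p - q \<in> free_star_alg G"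
  by (rule fsa_supp_sub[OF supp_diff]) (auto simp: fsa_iff)
lemma fsa_smul: "p \<in> free_star_alg G \<Longrightarrow> fa_smul c p \<in> free_star_alg G"
  by (rule fsa_supp_sub[OF supp_smul]) (auto simp: fsa_iff)
lemma fsa_zero: "0 \<in> free_star_alg G"
  by (auto simp: fsa_iff)
lemma fsa_mon: "w \<in> W G \<Longrightarrow> mon w \<in> free_star_alg G"
  by (auto simp: fsa_iff)
lemma fsa_one: "fa_one \<in> free_star_alg G"
  by (auto simp: fsa_iff fa_one_mon)
lemma fsa_gen: "g \<in> G \<Longrightarrow> fa_gen g \<in> free_star_alg G"
  by (auto simp: fsa_iff fa_gen_mon)
lemma fsa_star: "p \<in> free_star_alg G \<Longrightarrow> fa_star p \<in> free_star_alg G"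
  by (auto simp: fsa_iff supp_star)
lemma fsa_mult: "p \<in> free_star_alg G \<Longrightarrow> q \<in> free_star_alg G \<Longrightarrow> fa_mult p q \<in> free_star_alg G"
  by (rule fsa_supp_sub[OF supp_mult]) (auto simp: fsa_iff)
lemma fsa_sum: "finite I \<Longrightarrow> (\<And>i. i \<in> I \<Longrightarrow> f i \<in> free_star_alg G) \<Longrightarrow> (\<Sum>i\<in>I. f i) \<in> free_star_alg G"
  by (induct I rule: finite_induct) (auto intro: fsa_add fsa_zero)
lemma fsa_mono: "G \<subseteq> G' \<Longrightarrow> p \<in> free_star_alg G \<Longrightarrow> p \<in> free_star_alg G'"
  by (auto simp: fsa_iff W_def)
lemma fsa_UNIV: "p \<in> free_star_alg UNIV \<longleftrightarrow> finite (supp p)"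
  by (auto simp: fsa_iff)

section \<open>Extension of a generator map to a homomorphism\<close>

fun Lt :: "('g \<Rightarrow> 'k fsa) \<Rightarrow> 'g \<times> bool \<Rightarrow> 'k fsa" where
  "Lt \<phi> (g, b) = (if b then fa_star (\<phi> g) else \<phi> g)"

primrec Mw :: "('g \<Rightarrow> 'k fsa) \<Rightarrow> ('g \<times> bool) list \<Rightarrow> 'k fsa" where
  "Mw \<phi> [] = fa_one"
| "Mw \<phi> (l # w) = fa_mult (Lt \<phi> l) (Mw \<phi> w)"

definition fext :: "('g \<Rightarrow> 'k fsa) \<Rightarrow> 'g fsa \<Rightarrow> 'k fsa" where
  "fext \<phi> p = (\<Sum>w\<in>supp p. fa_smul (p w) (Mw \<phi> w))"

lemma fa_smul_add_left: "fa_smul (a + b) x = fa_smul a x + fa_smul b x"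
  by (auto simp: fa_smul_def algebra_simps)
lemma fa_smul_diff_left: "fa_smul (a - b) x = fa_smul a x - fa_smul b x"
  by (auto simp: fa_smul_def algebra_simps)

lemma fext_sum: "finite S \<Longrightarrow> supp p \<subseteq> S \<Longrightarrow> fext \<phi> p = (\<Sum>w\<in>S. fa_smul (p w) (Mw \<phi> w))"
  unfolding fext_def by (rule sum.mono_neutral_left) (auto simp: supp_def)

lemma fext_add: "finite (supp p) \<Longrightarrow> finite (supp q) \<Longrightarrow> fext \<phi> (p + q) = fext \<phi> p + fext \<phi> q"
  using supp_add[of p q]
  by (simp add: fext_sum[of "supp p \<union> supp q"] fa_smul_add_left sum.distrib)
lemma fext_diff: "finite (supp p) \<Longrightarrow> finite (supp q) \<Longrightarrow> fext \<phi> (p - q) = fext \<phi> p - fext \<phi> q"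
  using supp_diff[of p q]
  by (simp add: fext_sum[of "supp p \<union> supp q"] fa_smul_diff_left sum_subtractf)
lemma fext_smul: "finite (supp p) \<Longrightarrow> fext \<phi> (fa_smul c p) = fa_smul c (fext \<phi> p)"
  using supp_smul[of c p]
  by (simp add: fext_sum[of "supp p"] fa_smul_sum fa_smul_smul) (simp add: fa_smul_def)
lemma fext_zero[simp]: "fext \<phi> 0 = 0"
  by (simp add: fext_def)
lemma fext_mon[simp]: "fext \<phi> (mon w) = Mw \<phi> w"
  by (simp add: fext_def) (simp add: mon_def)
lemma fext_gen[simp]: "fext \<phi> (fa_gen g) = \<phi> g"
  by (simp add: fa_gen_mon)
lemma fext_one[simp]: "fext \<phi> fa_one = fa_one"
  by (simp add: fa_one_mon)

lemma decomp: "finite (supp p) \<Longrightarrow> p = (\<Sum>w\<in>supp p. fa_smul (p w) (mon w))"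
proof (rule ext)
  fix v assume f: "finite (supp p)"
  have "(\<Sum>w\<in>supp p. fa_smul (p w) (mon w)) v = (\<Sum>w\<in>supp p. if v = w then p w else 0)"
    by (simp add: sum_fun_apply fa_smul_def mon_def) (rule sum.cong, auto)
  also have "\<dots> = p v" using f by (subst sum.delta') (auto simp: supp_def)
  finally show "p v = (\<Sum>w\<in>supp p. fa_smul (p w) (mon w)) v" by simp
qed

lemma fin_sum: "finite I \<Longrightarrow> (\<And>i. i \<in> I \<Longrightarrow> finite (supp (f i))) \<Longrightarrow> finite (supp (\<Sum>i\<in>I. f i))"
  by (rule finite_subset[OF supp_sum]) auto
lemma fin_smul: "finite (supp p) \<Longrightarrow> finite (supp (fa_smul c p))"
  by (rule finite_subset[OF supp_smul])

lemma fext_suml: "finite I \<Longrightarrow> (\<And>i. i \<in> I \<Longrightarrow> finite (supp (f i))) \<Longrightarrow>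
   fext \<phi> (\<Sum>i\<in>I. f i) = (\<Sum>i\<in>I. fext \<phi> (f i))"
proof (induct I rule: finite_induct)
  case (insert x F)
  have "fext \<phi> (\<Sum>i\<in>insert x F. f i) = fext \<phi> (f x + (\<Sum>i\<in>F. f i))"
    by (simp only: sum.insert[OF insert(1,2)])
  also have "\<dots> = fext \<phi> (f x) + fext \<phi> (\<Sum>i\<in>F. f i)"
    by (rule fext_add) (use insert in \<open>auto intro!: fin_sum\<close>)
  also have "\<dots> = fext \<phi> (f x) + (\<Sum>i\<in>F. fext \<phi> (f i))"
    using insert by simp
  finally show ?case by (simp only: sum.insert[OF insert(1,2)])
qed simp

lemma Mw_append: "Mw \<phi> (u @ v) = fa_mult (Mw \<phi> u) (Mw \<phi> v)"
  by (induct u) (simp_all add: fa_mult_assoc)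

lemma Lt_flip: "Lt \<phi> (g, \<not> b) = fa_star (Lt \<phi> (g, b))"
  by simp

lemma Mw_flip: "Mw \<phi> (flip w) = fa_star (Mw \<phi> w)"
proof (induct w)
  case Nil then show ?case by simp
next
  case (Cons l w)
  obtain g b where l: "l = (g, b)" by (cases l)
  have "flip (l # w) = flip w @ [(g, \<not> b)]" by (simp add: flip_def l)
  then show ?case
    by (simp add: Mw_append Cons fa_star_mult l del: Lt.simps) (simp only: Lt_flip)
qed

lemma bilin_sum:
  "fa_mult (\<Sum>u\<in>A. fa_smul (a u) (X u)) (\<Sum>v\<in>B. fa_smul (b v) (Y v)) =
  (\<Sum>u\<in>A. \<Sum>v\<in>B. fa_smul (a u * b v) (fa_mult (X u) (Y v)))"
  apply (simp add: fa_mult_sum_left fa_mult_sum_right fa_mult_smul_left fa_mult_smul_right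
      fa_smul_smul fa_smul_sum)
  apply (subst sum.swap)
  apply (simp add: mult.commute)
  done

lemma fext_mult: "finite (supp p) \<Longrightarrow> finite (supp q) \<Longrightarrow>
   fext \<phi> (fa_mult p q) = fa_mult (fext \<phi> p) (fext \<phi> q)"
proof -
  assume fp: "finite (supp p)" and fq: "finite (supp q)"
  have "fa_mult p q = fa_mult (\<Sum>w\<in>supp p. fa_smul (p w) (mon w)) (\<Sum>w\<in>supp q. fa_smul (q w) (mon w))"
    using decomp[OF fp] decomp[OF fq] by simp
  also have "\<dots> = (\<Sum>u\<in>supp p. \<Sum>v\<in>supp q. fa_smul (p u * q v) (mon (u @ v)))"
    by (simp add: bilin_sum fa_mult_mon)
  finally have "fext \<phi> (fa_mult p q) = fext \<phi> (\<Sum>u\<in>supp p. \<Sum>v\<in>supp q. fa_smul (p u * q v) (mon (u @ v)))"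
    by simp
  also have "\<dots> = (\<Sum>u\<in>supp p. \<Sum>v\<in>supp q. fa_smul (p u * q v) (Mw \<phi> (u @ v)))"
    using fp fq by (simp add: fext_suml fin_sum fin_smul fext_smul)
  also have "\<dots> = fa_mult (fext \<phi> p) (fext \<phi> q)"
    unfolding fext_def by (simp add: bilin_sum Mw_append)
  finally show ?thesis .
qed

lemma fext_star: "finite (supp p) \<Longrightarrow> fext \<phi> (fa_star p) = fa_star (fext \<phi> p)"
proof -
  assume fp: "finite (supp p)"
  have "fa_star p = (\<Sum>w\<in>supp p. fa_smul (cnj (p w)) (mon (flip w)))"
    by (subst decomp[OF fp]) (simp add: fa_star_sum fa_star_smul fa_star_mon)
  then have "fext \<phi> (fa_star p) = (\<Sum>w\<in>supp p. fa_smul (cnj (p w)) (Mw \<phi> (flip w)))"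
    using fp by (simp add: fext_suml fin_smul fext_smul)
  then show ?thesis
    by (simp add: fext_def fa_star_sum fa_star_smul Mw_flip)
qed

lemma fsa_Mw: "w \<in> W G1 \<Longrightarrow> (\<And>g. g \<in> G1 \<Longrightarrow> \<phi> g \<in> free_star_alg G2) \<Longrightarrow> Mw \<phi> w \<in> free_star_alg G2"
proof (induct w)
  case Nil then show ?case by (simp add: fsa_one)
next
  case (Cons l w)
  obtain g b where l: "l = (g, b)" by (cases l)
  then show ?case using Cons
    by (auto intro!: fsa_mult fsa_star)
qed

lemma fsa_fext: "p \<in> free_star_alg G1 \<Longrightarrow> (\<And>g. g \<in> G1 \<Longrightarrow> \<phi> g \<in> free_star_alg G2) \<Longrightarrow>
  fext \<phi> p \<in> free_star_alg G2"
proof -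
  assume a: "p \<in> free_star_alg G1" "\<And>g. g \<in> G1 \<Longrightarrow> \<phi> g \<in> free_star_alg G2"
  then have "finite (supp p)" "supp p \<subseteq> W G1" by (auto simp: fsa_iff)
  then show ?thesis unfolding fext_def using a(2)
    by (intro fsa_sum fsa_smul fsa_Mw) auto
qed


lemma ideal_zero: "0 \<in> star_ideal G R"
  using star_ideal.zero by (simp add: fa_zero_eq)
lemma ideal_add: "x \<in> star_ideal G R \<Longrightarrow> y \<in> star_ideal G R \<Longrightarrow> x + y \<in> star_ideal G R"
  using star_ideal.add by (simp add: fa_add_eq)
lemma ideal_smul: "x \<in> star_ideal G R \<Longrightarrow> fa_smul c x \<in> star_ideal G R"
  by (rule star_ideal.smul)
lemma ideal_star: "x \<in> star_ideal G R \<Longrightarrow> fa_star x \<in> star_ideal G R"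
  by (rule star_ideal.star)
lemma ideal_diff: "x \<in> star_ideal G R \<Longrightarrow> y \<in> star_ideal G R \<Longrightarrow> x - y \<in> star_ideal G R"
proof -
  assume x: "x \<in> star_ideal G R" and y: "y \<in> star_ideal G R"
  have e: "x - y = x + fa_smul (-1) y" by (auto simp: fa_smul_def)
  show ?thesis unfolding e by (intro ideal_add ideal_smul x y)
qed
lemma ideal_uminus: "x \<in> star_ideal G R \<Longrightarrow> - x \<in> star_ideal G R"
  using ideal_diff[OF ideal_zero] by fastforce
lemma ideal_multl: "x \<in> star_ideal G R \<Longrightarrow> a \<in> free_star_alg G \<Longrightarrow> fa_mult a x \<in> star_ideal G R"
  by (rule star_ideal.multl)
lemma ideal_multr: "x \<in> star_ideal G R \<Longrightarrow> a \<in> free_star_alg G \<Longrightarrow> fa_mult x a \<in> star_ideal G R"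
  by (rule star_ideal.multr)
lemma ideal_sum: "(\<And>i. i \<in> I \<Longrightarrow> f i \<in> star_ideal G R) \<Longrightarrow> (\<Sum>i\<in>I. f i) \<in> star_ideal G R"
  by (induct I rule: infinite_finite_induct) (auto intro: ideal_add ideal_zero)
lemma ideal_gen: "r \<in> R \<Longrightarrow> r \<in> star_ideal G R"
  by (rule star_ideal.gen)

lemma ideal_sub_fsa:
  assumes R: "R \<subseteq> free_star_alg G" and x: "x \<in> star_ideal G R"
  shows "x \<in> free_star_alg G"
  using x
proof (induct x rule: star_ideal.induct)
  case gen then show ?case using R by auto
next
  case zero then show ?case by (simp only: fa_zero_eq fsa_zero)
next
  case (add x y) then show ?case unfolding fa_add_eq by (intro fsa_add) auto
qed (auto intro: fsa_smul fsa_star fsa_mult)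

definition eqv :: "'g fsa set \<Rightarrow> 'g fsa \<Rightarrow> 'g fsa \<Rightarrow> bool" where
  "eqv I x y \<longleftrightarrow> x - y \<in> I"

lemma eqv_refl: "eqv (star_ideal G R) x x"
  by (simp add: eqv_def ideal_zero)
lemma eqv_sym: "eqv (star_ideal G R) x y \<Longrightarrow> eqv (star_ideal G R) y x"
  unfolding eqv_def using ideal_uminus by fastforce
lemma eqv_trans: "eqv (star_ideal G R) x y \<Longrightarrow> eqv (star_ideal G R) y z \<Longrightarrow> eqv (star_ideal G R) x z"
  unfolding eqv_def using ideal_add by fastforce
lemma eqv_add: "eqv (star_ideal G R) x y \<Longrightarrow> eqv (star_ideal G R) x' y' \<Longrightarrow> eqv (star_ideal G R) (x + x') (y + y')"
  unfolding eqv_def using ideal_add by (fastforce simp: algebra_simps)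
lemma eqv_diff: "eqv (star_ideal G R) x y \<Longrightarrow> eqv (star_ideal G R) x' y' \<Longrightarrow> eqv (star_ideal G R) (x - x') (y - y')"
  unfolding eqv_def using ideal_diff by (fastforce simp: algebra_simps)
lemma eqv_smul: "eqv (star_ideal G R) x y \<Longrightarrow> eqv (star_ideal G R) (fa_smul c x) (fa_smul c y)"
  unfolding eqv_def using ideal_smul by (fastforce simp: fa_smul_diff[symmetric])
lemma eqv_star: "eqv (star_ideal G R) x y \<Longrightarrow> eqv (star_ideal G R) (fa_star x) (fa_star y)"
  unfolding eqv_def using ideal_star by (fastforce simp: fa_star_diff[symmetric])
lemma eqv_mult: "eqv (star_ideal G R) x x' \<Longrightarrow> eqv (star_ideal G R) y y' \<Longrightarrow>
   x' \<in> free_star_alg G \<Longrightarrow> y \<in> free_star_alg G \<Longrightarrow>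
   eqv (star_ideal G R) (fa_mult x y) (fa_mult x' y')"
proof -
  assume a: "eqv (star_ideal G R) x x'" "eqv (star_ideal G R) y y'"
    "x' \<in> free_star_alg G" "y \<in> free_star_alg G"
  have e: "fa_mult x y - fa_mult x' y' = fa_mult (x - x') y + fa_mult x' (y - y')"
    by (simp add: fa_mult_diff_left fa_mult_diff_right)
  show ?thesis using a unfolding eqv_def e
    by (intro ideal_add ideal_multl ideal_multr) auto
qed
lemma eqv_in: "eqv (star_ideal G R) x y \<Longrightarrow> y \<in> star_ideal G R \<Longrightarrow> x \<in> star_ideal G R"
  unfolding eqv_def using ideal_add by fastforce

lemma fext_maps_ideal:
  assumes R1: "R1 \<subseteq> free_star_alg G1"
    and phi: "\<And>g. g \<in> G1 \<Longrightarrow> \<phi> g \<in> free_star_alg G2"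
    and rel: "\<And>r. r \<in> R1 \<Longrightarrow> fext \<phi> r \<in> star_ideal G2 R2"
    and x: "x \<in> star_ideal G1 R1"
  shows "fext \<phi> x \<in> star_ideal G2 R2"
  using x
proof (induct x rule: star_ideal.induct)
  case (gen r) then show ?case by (rule rel)
next
  case zero then show ?case by (simp only: fa_zero_eq fext_zero ideal_zero)
next
  case (add x y)
  then have "finite (supp x)" "finite (supp y)"
    using ideal_sub_fsa[OF R1] by (auto simp: fsa_iff)
  with add show ?case unfolding fa_add_eq by (subst fext_add) (auto intro: ideal_add)
next
  case (smul x c)
  then have "finite (supp x)" using ideal_sub_fsa[OF R1] by (auto simp: fsa_iff)
  with smul show ?case by (simp add: fext_smul ideal_smul)
next
  case (star x)
  then have "finite (supp x)" using ideal_sub_fsa[OF R1] by (auto simp: fsa_iff)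
  with star show ?case by (simp add: fext_star ideal_star)
next
  case (multl x a)
  then have "finite (supp x)" "finite (supp a)" using ideal_sub_fsa[OF R1] by (auto simp: fsa_iff)
  with multl show ?case by (simp add: fext_mult ideal_multl fsa_fext phi)
next
  case (multr x a)
  then have "finite (supp x)" "finite (supp a)" using ideal_sub_fsa[OF R1] by (auto simp: fsa_iff)
  with multr show ?case by (simp add: fext_mult ideal_multr fsa_fext phi)
qed


lemma fext_approx:
  assumes phi: "\<And>g. g \<in> G \<Longrightarrow> \<phi> g \<in> free_star_alg G"
    and close: "\<And>g. g \<in> G \<Longrightarrow> \<phi> g - fa_gen g \<in> star_ideal G R"
    and x: "x \<in> free_star_alg G"
  shows "fext \<phi> x - x \<in> star_ideal G R"
proof -
  have Mw: "Mw \<phi> w - mon w \<in> star_ideal G R" if "w \<in> W G" for w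
    using that
  proof (induct w)
    case Nil then show ?case using ideal_zero[of G R] by (simp only: Mw.simps fa_one_mon diff_self)
  next
    case (Cons l w)
    obtain g b where l: "l = (g, b)" by (cases l)
    have g: "g \<in> G" using Cons l by auto
    have L: "Lt \<phi> l - mon [l] \<in> star_ideal G R"
    proof (cases b)
      case True
      have "mon [l] = fa_star (fa_gen g)" by (simp add: l True fa_gen_mon fa_star_mon flip_def)
      then show ?thesis using ideal_star[OF close[OF g]] by (simp add: l True fa_star_diff)
    next
      case False
      then show ?thesis using close[OF g] by (simp add: l fa_gen_mon)
    qed
    have e: "Mw \<phi> (l # w) - mon (l # w) =
       fa_mult (Lt \<phi> l - mon [l]) (Mw \<phi> w) + fa_mult (mon [l]) (Mw \<phi> w - mon w)"
      by (simp only: Mw.simps fa_mult_diff_left fa_mult_diff_right fa_mult_mon append.simps) (simp add: algebra_simps)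
    have wG: "w \<in> W G" using Cons(2) by simp
    have Mi: "Mw \<phi> w - mon w \<in> star_ideal G R" by (rule Cons(1)[OF wG])
    have MA: "Mw \<phi> w \<in> free_star_alg G" by (rule fsa_Mw[OF wG phi])
    have lA: "mon [l] \<in> free_star_alg G" by (rule fsa_mon) (simp add: l g)
    show ?case unfolding e by (rule ideal_add[OF ideal_multr[OF L MA] ideal_multl[OF Mi lA]])
  qed
  have fx: "finite (supp x)" "supp x \<subseteq> W G" using x by (auto simp: fsa_iff)
  have "fext \<phi> x - x = (\<Sum>w\<in>supp x. fa_smul (x w) (Mw \<phi> w - mon w))"
    by (subst (2) decomp[OF fx(1)]) (simp add: fext_def fa_smul_diff sum_subtractf)
  also have "\<dots> \<in> star_ideal G R"
    using fx Mw by (intro ideal_sum ideal_smul) auto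
  finally show ?thesis .
qed


locale setting =
  fixes smul :: "complex \<Rightarrow> 'h::ab_group_add \<Rightarrow> 'h"
    and ip :: "'h \<Rightarrow> 'h \<Rightarrow> complex"
    and H0 H1 :: "'h set"
    and J P :: "'h \<Rightarrow> 'h"
  assumes gh: "graded_hilbert smul ip H0 H1"
    and ec: "even_conjugation smul ip H0 H1 J"
    and ep: "even_orth_projection smul ip H0 H1 P"
    and jp: "\<forall>x. J (P x) = J x - P (J x)"
begin

abbreviation g where "g \<equiv> gam H0 H1"
abbreviation q where "q \<equiv> qop H0 H1 P"

lemma ips: "inner_product_space smul ip" using gh unfolding graded_hilbert_def by blast

lemma vs: "vector_space smul" using ips unfolding inner_product_space_def by blast

lemma md: "module smul"
  using vs unfolding vector_space_def module_def by auto

interpretation V: module smul by (rule md)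

lemma ip_add: "ip x (y + z) = ip x y + ip x z" using ips unfolding inner_product_space_def by blast
lemma ip_smul: "ip x (smul c y) = c * ip x y" using ips unfolding inner_product_space_def by blast
lemma ip_sym: "ip y x = cnj (ip x y)" using ips unfolding inner_product_space_def by blast
lemma ip_pos: "ip x x = 0 \<Longrightarrow> x = 0" using ips unfolding inner_product_space_def by blast

lemma ip_zero[simp]: "ip x 0 = 0"
  using ip_add[of x 0 0] by simp
lemma ip_zero_left[simp]: "ip 0 x = 0"
  using ip_sym[of x 0] by simp
lemma ip_minus: "ip x (- y) = - ip x y"
  using ip_add[of x y "- y"] by (simp add: eq_neg_iff_add_eq_0 add.commute)
lemma ip_diff: "ip x (y - z) = ip x y - ip x z"
  using ip_add[of x y "- z"] ip_minus[of x z] by simp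
lemma ip_add_left: "ip (x + y) z = ip x z + ip y z"
  by (metis ip_add ip_sym complex_cnj_add)
lemma ip_diff_left: "ip (x - y) z = ip x z - ip y z"
  by (metis ip_diff ip_sym complex_cnj_diff)

lemma sub0: "module.subspace smul H0" using gh unfolding graded_hilbert_def infinite_dim_subspace_def by blast
lemma sub1: "module.subspace smul H1" using gh unfolding graded_hilbert_def infinite_dim_subspace_def by blast
lemma orth: "x \<in> H0 \<Longrightarrow> y \<in> H1 \<Longrightarrow> ip x y = 0" using gh unfolding graded_hilbert_def by blast
lemma orth': "x \<in> H1 \<Longrightarrow> y \<in> H0 \<Longrightarrow> ip x y = 0" using orth[of y x] ip_sym[of y x] by simp
lemma decomp_ex: "\<exists>a\<in>H0. \<exists>b\<in>H1. x = a + b" using gh unfolding graded_hilbert_def by blast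

lemma H0_0: "0 \<in> H0" using V.subspace_0[OF sub0] .
lemma H1_0: "0 \<in> H1" using V.subspace_0[OF sub1] .
lemma H0_add: "x \<in> H0 \<Longrightarrow> y \<in> H0 \<Longrightarrow> x + y \<in> H0" using V.subspace_add[OF sub0] .
lemma H1_add: "x \<in> H1 \<Longrightarrow> y \<in> H1 \<Longrightarrow> x + y \<in> H1" using V.subspace_add[OF sub1] .
lemma H0_diff: "x \<in> H0 \<Longrightarrow> y \<in> H0 \<Longrightarrow> x - y \<in> H0" using V.subspace_diff[OF sub0] .
lemma H1_diff: "x \<in> H1 \<Longrightarrow> y \<in> H1 \<Longrightarrow> x - y \<in> H1" using V.subspace_diff[OF sub1] .
lemma H0_neg: "x \<in> H0 \<Longrightarrow> - x \<in> H0" using V.subspace_neg[OF sub0] .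
lemma H1_neg: "x \<in> H1 \<Longrightarrow> - x \<in> H1" using V.subspace_neg[OF sub1] .
lemma H0_smul: "x \<in> H0 \<Longrightarrow> smul c x \<in> H0" using V.subspace_scale[OF sub0] .
lemma H1_smul: "x \<in> H1 \<Longrightarrow> smul c x \<in> H1" using V.subspace_scale[OF sub1] .

lemma H01: "x \<in> H0 \<Longrightarrow> x \<in> H1 \<Longrightarrow> x = 0"
  using orth ip_pos by blast

lemma proj0_eq: "a \<in> H0 \<Longrightarrow> x - a \<in> H1 \<Longrightarrow> proj0 H0 H1 x = a"
  unfolding proj0_def
proof (rule the_equality)
  fix a' assume a: "a \<in> H0" "x - a \<in> H1" and a': "a' \<in> H0 \<and> x - a' \<in> H1"
  have "a' - a \<in> H0" using a a' H0_diff by blast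
  moreover have "a' - a \<in> H1" using H1_diff[OF a(2), of "x - a'"] a' by (simp add: algebra_simps)
  ultimately show "a' = a" using H01 by fastforce
qed auto

lemma proj0_in: "proj0 H0 H1 x \<in> H0 \<and> x - proj0 H0 H1 x \<in> H1"
proof -
  obtain a b where "a \<in> H0" "b \<in> H1" "x = a + b" using decomp_ex by blast
  then have "proj0 H0 H1 x = a" by (intro proj0_eq) auto
  then show ?thesis using \<open>a \<in> H0\<close> \<open>b \<in> H1\<close> \<open>x = a + b\<close> by simp
qed

lemma g_H0: "x \<in> H0 \<Longrightarrow> g x = x"
  using proj0_eq[of x x] H1_0 by (simp add: gam_def)
lemma g_H1: "x \<in> H1 \<Longrightarrow> g x = - x"
  using proj0_eq[of 0 x] H0_0 by (simp add: gam_def)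

lemma g_add: "g (x + y) = g x + g y"
proof -
  have "proj0 H0 H1 (x + y) = proj0 H0 H1 x + proj0 H0 H1 y"
    using proj0_in[of x] proj0_in[of y]
    by (intro proj0_eq) (auto intro: H0_add dest: H1_add simp: algebra_simps)
  then show ?thesis by (simp add: gam_def algebra_simps)
qed

lemma g_smul: "g (smul c x) = smul c (g x)"
proof -
  have "proj0 H0 H1 (smul c x) = smul c (proj0 H0 H1 x)"
    using proj0_in[of x] H0_smul H1_smul V.scale_right_diff_distrib
    by (intro proj0_eq) (auto simp flip: V.scale_right_diff_distrib)
  then show ?thesis by (simp add: gam_def V.scale_right_diff_distrib)
qed

interpretation G: additive g by standard (rule g_add)

lemma g_g: "g (g x) = x"
proof -
  let ?p = "proj0 H0 H1 x"
  have "proj0 H0 H1 (g x) = ?p"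
    using proj0_in[of x] by (intro proj0_eq) (auto simp: gam_def dest: H1_neg)
  then show ?thesis by (simp add: gam_def)
qed

lemma two_zero: "(x::'h) + x = 0 \<Longrightarrow> x = 0"
proof -
  assume "x + x = 0"
  then have "smul 2 x = 0" using V.scale_left_distrib[of 1 1 x] by simp
  then have "smul (1/2) (smul 2 x) = 0" by simp
  then show "x = 0" by simp
qed

lemma H0_iff: "x \<in> H0 \<longleftrightarrow> g x = x"
proof
  assume "g x = x"
  let ?p = "proj0 H0 H1 x"
  have "?p - (x - ?p) = x" using \<open>g x = x\<close> by (simp add: gam_def)
  then have "(x - ?p) + (x - ?p) = 0" by (simp add: algebra_simps)
  then have "x - ?p = 0" by (rule two_zero)
  then show "x \<in> H0" using proj0_in[of x] by simp
qed (rule g_H0)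

lemma H1_iff: "x \<in> H1 \<longleftrightarrow> g x = - x"
proof
  assume "g x = - x"
  let ?p = "proj0 H0 H1 x"
  have "?p - (x - ?p) = - x" using \<open>g x = - x\<close> by (simp add: gam_def)
  then have "?p + ?p = 0" by (simp add: algebra_simps)
  then have "?p = 0" by (rule two_zero)
  then show "x \<in> H1" using proj0_in[of x] by simp
qed (rule g_H1)

lemma P_add: "P (x + y) = P x + P y" using ep unfolding even_orth_projection_def by blast
lemma P_smul: "P (smul c x) = smul c (P x)" using ep unfolding even_orth_projection_def by blast
lemma P_P[simp]: "P (P x) = P x" using ep unfolding even_orth_projection_def by blast
lemma P_adj: "ip (P x) y = ip x (P y)" using ep unfolding even_orth_projection_def by blast
lemma P_g: "P (g x) = g (P x)" using ep unfolding even_orth_projection_def by blast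

interpretation PA: additive P by standard (rule P_add)

lemma J_add: "J (x + y) = J x + J y" using ec unfolding even_conjugation_def by blast
lemma J_smul: "J (smul c x) = smul (cnj c) (J x)" using ec unfolding even_conjugation_def by blast
lemma J_norm: "hnorm ip (J x) = hnorm ip x" using ec unfolding even_conjugation_def by blast
lemma J_J[simp]: "J (J x) = x" using ec unfolding even_conjugation_def by blast
lemma J_g: "J (g x) = g (J x)" using ec unfolding even_conjugation_def by blast

interpretation JA: additive J by standard (rule J_add)

lemma JP: "J (P x) = J x - P (J x)" using jp by simp
lemma PJ: "P (J x) = J x - J (P x)" using JP[of x] by (simp add: algebra_simps)
lemma PJP[simp]: "P (J (P x)) = 0" using PJ[of "P x"] by simp

lemma ipRe: "Re (ip (J x) (J x)) = Re (ip x x)"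
  using J_norm[of x] by (simp add: hnorm_def)

lemma N_add: "Re (ip (a + b) (a + b)) = Re (ip a a) + Re (ip b b) + 2 * Re (ip a b)"
proof -
  have "ip (a + b) (a + b) = ip a a + ip a b + ip b a + ip b b"
    by (simp add: ip_add ip_add_left)
  moreover have "ip b a = cnj (ip a b)" by (rule ip_sym)
  ultimately show ?thesis by simp
qed

lemma Re_J: "Re (ip (J x) (J y)) = Re (ip x y)"
proof -
  have "Re (ip (J (x + y)) (J (x + y))) = Re (ip (x + y) (x + y))" by (rule ipRe)
  then show ?thesis unfolding J_add N_add by (simp add: ipRe)
qed

lemma ip_J: "ip (J x) (J y) = ip y x"
proof (rule complex_eqI)
  have s: "ip y x = cnj (ip x y)" by (rule ip_sym)
  show "Re (ip (J x) (J y)) = Re (ip y x)" by (simp add: Re_J s)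
  have "Re (ip (J x) (J (smul \<i> y))) = Re (ip x (smul \<i> y))" by (rule Re_J)
  then have "Im (ip (J x) (J y)) = - Im (ip x y)"
    by (simp add: J_smul ip_smul ip_minus)
  then show "Im (ip (J x) (J y)) = Im (ip y x)" by (simp add: s)
qed

end


context setting
begin

interpretation V: module smul by (rule md)
interpretation G: additive g by standard (rule g_add)
interpretation PA: additive P by standard (rule P_add)
interpretation JA: additive J by standard (rule J_add)

lemma smul_m1: "smul (-1) x = - x" by simp

lemma q_eq: "q f = P f - g (f - P f)" by (simp add: qop_def)

lemma homog_g: "homog H0 H1 a f \<Longrightarrow> g f = (if a then - f else f)"
  by (auto simp: homog_def g_H0 g_H1)

lemma homog_iff: "homog H0 H1 a f \<longleftrightarrow> g f = (if a then - f else f)"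
  by (auto simp: homog_def H0_iff H1_iff)

lemma homog_P: "homog H0 H1 a f \<Longrightarrow> homog H0 H1 a (P f)"
  by (simp add: homog_iff P_g[symmetric] PA.minus)
lemma homog_J: "homog H0 H1 a f \<Longrightarrow> homog H0 H1 a (J f)"
  by (simp add: homog_iff J_g[symmetric] JA.minus)
lemma homog_gg: "homog H0 H1 a f \<Longrightarrow> homog H0 H1 a (g f)"
  by (simp add: homog_iff G.minus)
lemma homog_neg: "homog H0 H1 a f \<Longrightarrow> homog H0 H1 a (- f)"
  by (simp add: homog_iff G.minus)
lemma homog_diff: "homog H0 H1 a f \<Longrightarrow> homog H0 H1 a f' \<Longrightarrow> homog H0 H1 a (f - f')"
  by (simp add: homog_iff G.diff)

lemma I1: "P (smul c1 f1 + smul c2 f2) = smul c1 (P f1) + smul c2 (P f2)"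
  by (simp add: P_add P_smul)
lemma I2: "P (g (J (smul c1 f1 + smul c2 f2))) = smul (cnj c1) (P (g (J f1))) + smul (cnj c2) (P (g (J f2)))"
  by (simp add: P_add P_smul J_add J_smul g_add g_smul)
lemma I3: "P (q f) = P f"
  by (simp add: q_eq PA.diff P_g G.diff)
lemma PJd: "P (J (f - P f)) = P (J f)"
  by (simp add: JA.diff PA.diff)
lemma I4: "P (J (q f)) = - P (g (J f))"
  by (simp add: q_eq JA.diff PA.diff J_g P_g PJd)
lemma I5: "P (g (J (q (J f)))) = - P f"
  by (simp add: P_g I4[unfolded P_g] G.minus g_g)
lemma I7: "P f = f \<Longrightarrow> q f = f"
  by (simp add: q_eq G.zero)
lemma PJ0: "P f = f \<Longrightarrow> P (J f) = 0"
  by (metis PJP)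
lemma I8a: "P f2 = f2 \<Longrightarrow> q (J f2) = - g (J f2)"
  by (simp add: q_eq PJ0 G.zero)
lemma I8b: "P f1 = f1 \<Longrightarrow> P f2 = f2 \<Longrightarrow> ip f1 (q (J f2)) = 0"
proof -
  assume a: "P f1 = f1" "P f2 = f2"
  have "ip f1 (q (J f2)) = ip (P f1) (- g (J f2))" using a by (simp add: I8a)
  also have "\<dots> = ip f1 (P (- g (J f2)))" by (rule P_adj)
  also have "\<dots> = 0" using a by (simp add: PA.minus P_g PJ0 G.zero)
  finally show ?thesis .
qed
lemma I9: "q (J (P (g (J f)))) = - (f - P f)"
proof -
  have "J (P (g (J f))) = g f - P (g f)" by (simp add: JP J_g)
  then show ?thesis by (simp add: q_eq PA.diff G.diff g_g P_g[symmetric] G.minus)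
qed
lemma I10: "q (J f) = P (J f) + q (J (P f))"
proof -
  have "J (P f) = J f - P (J f)" by (rule JP)
  then show ?thesis by (simp add: q_eq PA.diff)
qed
lemma I11: "P f = f \<Longrightarrow> P (g (J f)) = 0"
  by (simp add: P_g PJ0 G.zero)

lemma ip_neg_left: "ip (- x) y = - ip x y"
  using ip_diff_left[of 0 x y] by simp

lemma I6:
  assumes a: "homog H0 H1 a f1" and b: "homog H0 H1 b f2"
  shows "ip (P f1) (P f2) + ssign a b * ip (P (g (J f2))) (P (J f1)) = ip f1 f2"
proof -
  define u1 where "u1 = f1 - P f1"
  define u2 where "u2 = f2 - P f2"
  have hu1: "homog H0 H1 a u1" unfolding u1_def by (rule homog_diff[OF a homog_P[OF a]])
  have hu2: "homog H0 H1 b u2" unfolding u2_def by (rule homog_diff[OF b homog_P[OF b]])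
  have e1: "P (J f1) = J u1" by (simp add: u1_def PJ JA.diff)
  have e2: "P (g (J f2)) = g (J u2)" by (simp add: u2_def P_g PJ JA.diff)
  have gJ: "g (J u2) = (if b then - J u2 else J u2)" by (rule homog_g[OF homog_J[OF hu2]])
  have iu: "ip u1 u2 = ip f1 f2 - ip f1 (P f2)"
    by (simp add: u1_def u2_def ip_diff ip_diff_left P_adj)
  have ip_PP: "ip (P f1) (P f2) = ip f1 (P f2)" by (simp add: P_adj)
  have main: "ip (P (g (J f2))) (P (J f1)) = (if b then - ip u1 u2 else ip u1 u2)"
    by (simp add: e1 e2 gJ ip_neg_left ip_J)
  show ?thesis
  proof (cases "a = b")
    case True
    then show ?thesis by (cases b) (simp_all add: main ssign_def iu ip_PP)
  next
    case False
    have o: "ip x y = 0" if "homog H0 H1 a x" "homog H0 H1 b y" for x y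
      using that False by (cases a; cases b) (auto simp: homog_def orth orth')
    have "ip u1 u2 = 0" by (rule o[OF hu1 hu2])
    moreover have "ip (P f1) (P f2) = 0" by (rule o[OF homog_P[OF a] homog_P[OF b]])
    moreover have "ip f1 f2 = 0" by (rule o[OF a b])
    ultimately show ?thesis by (simp add: main)
  qed
qed

end


declare eqv_trans[trans]

lemma fa_smul_m1: "fa_smul (-1) x = - x" by (auto simp: fa_smul_def)
lemma fa_star_uminus: "fa_star (- x) = - fa_star x" by (auto simp: fa_star_def)
lemma cnj_ssign[simp]: "cnj (ssign a b) = ssign a b" by (simp add: ssign_def)
lemma ssign_sym: "ssign b a = ssign a b" by (auto simp: ssign_def)

lemma fin_gen[simp]: "finite (supp (fa_gen x))" by (simp add: fa_gen_mon)
lemma fin_one[simp]: "finite (supp fa_one)" by (simp add: fa_one_mon)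
lemma fin_add[simp]: "finite (supp p) \<Longrightarrow> finite (supp q) \<Longrightarrow> finite (supp (p + q))"
  by (rule finite_subset[OF supp_add]) auto
lemma fin_diff[simp]: "finite (supp p) \<Longrightarrow> finite (supp q) \<Longrightarrow> finite (supp (p - q))"
  by (rule finite_subset[OF supp_diff]) auto
lemma fin_mult[simp]: "finite (supp p) \<Longrightarrow> finite (supp q) \<Longrightarrow> finite (supp (fa_mult p q))"
  by (rule finite_subset[OF supp_mult]) auto
lemma fin_star[simp]: "finite (supp p) \<Longrightarrow> finite (supp (fa_star p))"
  by (simp add: supp_star)
declare fin_smul[simp]

declare fext_gen[simp del]
lemmas fext_simps = fext_add fext_diff fext_smul fext_mult fext_star fext_one

context setting
begin

interpretation V: module smul by (rule md)
interpretation G: additive g by standard (rule g_add)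
interpretation PA: additive P by standard (rule P_add)
interpretation JA: additive J by standard (rule J_add)

abbreviation "G2 \<equiv> csr_gens P"
abbreviation "R2 \<equiv> csr_relations smul ip H0 H1 P"
abbreviation "I2 \<equiv> star_ideal G2 R2"
abbreviation "R1 \<equiv> ssr_relations smul ip H0 H1 J P"
abbreviation "I1 \<equiv> star_ideal (UNIV :: 'h cgen set) R1"

abbreviation Cg where "Cg x \<equiv> fa_gen (Cr x)"
abbreviation Ag where "Ag x \<equiv> fa_gen (An x)"

lemma rangeP: "P x \<in> range P" by simp
lemma rangeP_iff: "x \<in> range P \<longleftrightarrow> P x = x" by (metis P_P rangeE rangeI)

lemma C_A2: "x \<in> range P \<Longrightarrow> Cg x \<in> free_star_alg G2"
  by (rule fsa_gen) (auto simp: csr_gens_def)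
lemma A_A2: "x \<in> range P \<Longrightarrow> Ag x \<in> free_star_alg G2"
  by (rule fsa_gen) (auto simp: csr_gens_def)
lemma gen_A1: "fa_gen x \<in> free_star_alg UNIV"
  by (rule fsa_gen) simp

lemma K1: "x \<in> range P \<Longrightarrow> y \<in> range P \<Longrightarrow>
  Cg (smul c1 x + smul c2 y) - (fa_smul c1 (Cg x) + fa_smul c2 (Cg y)) \<in> I2"
  apply (rule ideal_gen)
  unfolding csr_relations_def fa_diff_eq[symmetric] fa_add_eq[symmetric] by blast

lemma K2: "x \<in> range P \<Longrightarrow> Cg x - fa_star (Ag x) \<in> I2"
  apply (rule ideal_gen)
  unfolding csr_relations_def fa_diff_eq[symmetric] by blast

lemma K2': "x \<in> range P \<Longrightarrow> Ag x - fa_star (Cg x) \<in> I2"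
  using ideal_uminus[OF ideal_star[OF K2[of x]]] by (simp add: fa_star_diff)

lemma K4: "x \<in> range P \<Longrightarrow> y \<in> range P \<Longrightarrow> homog H0 H1 a x \<Longrightarrow> homog H0 H1 b y \<Longrightarrow>
  fa_mult (Ag x) (Cg y) - fa_smul (ssign a b) (fa_mult (Cg y) (Ag x)) - fa_smul (ip x y) fa_one \<in> I2"
  apply (rule ideal_gen)
  unfolding csr_relations_def fa_diff_eq[symmetric] by blast

lemma K5: "x \<in> range P \<Longrightarrow> y \<in> range P \<Longrightarrow> homog H0 H1 a x \<Longrightarrow> homog H0 H1 b y \<Longrightarrow>
  fa_mult (Ag x) (Ag y) - fa_smul (ssign a b) (fa_mult (Ag y) (Ag x)) \<in> I2"
  apply (rule ideal_gen)
  unfolding csr_relations_def fa_diff_eq[symmetric] by blast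

lemma K3: assumes x: "x \<in> range P" and y: "y \<in> range P"
  shows "Ag (smul d1 x + smul d2 y) - (fa_smul (cnj d1) (Ag x) + fa_smul (cnj d2) (Ag y)) \<in> I2"
proof -
  let ?z = "smul d1 x + smul d2 y"
  have z: "?z \<in> range P" using x y by (simp add: rangeP_iff P_add P_smul)
  have "eqv I2 (Ag ?z) (fa_star (Cg ?z))" unfolding eqv_def by (rule K2'[OF z])
  also have "eqv I2 (fa_star (Cg ?z)) (fa_star (fa_smul d1 (Cg x) + fa_smul d2 (Cg y)))"
    by (rule eqv_star) (simp add: eqv_def K1[OF x y])
  also have "fa_star (fa_smul d1 (Cg x) + fa_smul d2 (Cg y)) =
      fa_smul (cnj d1) (fa_star (Cg x)) + fa_smul (cnj d2) (fa_star (Cg y))"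
    by (simp add: fa_star_add fa_star_smul)
  also have "eqv I2 \<dots> (fa_smul (cnj d1) (Ag x) + fa_smul (cnj d2) (Ag y))"
  proof -
    have "eqv I2 (fa_star (Cg x)) (Ag x)" "eqv I2 (fa_star (Cg y)) (Ag y)"
      by (rule eqv_sym, simp add: eqv_def K2' x y)+
    then show ?thesis by (intro eqv_add eqv_smul)
  qed
  finally show ?thesis unfolding eqv_def .
qed

lemma K3n: "y \<in> range P \<Longrightarrow> Ag (- y) + Ag y \<in> I2"
  using K3[of y y "-1" 0] by (simp add: fa_smul_m1)

lemma K3smul: "y \<in> range P \<Longrightarrow> Ag (smul d y) - fa_smul (cnj d) (Ag y) \<in> I2"
  using K3[of y y d 0] by simp

lemma A0: "Ag 0 \<in> I2"
proof -
  have z: "0 \<in> range P" by (simp add: rangeP_iff PA.zero)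
  show ?thesis using K3[OF z z, of 0 0] by simp
qed

lemma C0: "Cg 0 \<in> I2"
proof -
  have z: "0 \<in> range P" by (simp add: rangeP_iff PA.zero)
  show ?thesis using K1[OF z z, of 0 0] by simp
qed

lemma S1: "Cg (smul c1 x + smul c2 y) - (fa_smul c1 (Cg x) + fa_smul c2 (Cg y)) \<in> I1"
  apply (rule ideal_gen)
  unfolding ssr_relations_def fa_diff_eq[symmetric] fa_add_eq[symmetric] by blast

lemma S2: "Cg f - fa_star (Ag (q f)) \<in> I1"
  apply (rule ideal_gen)
  unfolding ssr_relations_def fa_diff_eq[symmetric] by blast

lemma S3: "homog H0 H1 a x \<Longrightarrow> homog H0 H1 b y \<Longrightarrow>
  fa_mult (Ag x) (Cg y) - fa_smul (ssign a b) (fa_mult (Cg y) (Ag x)) - fa_smul (ip x y) fa_one \<in> I1"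
  apply (rule ideal_gen)
  unfolding ssr_relations_def fa_diff_eq[symmetric] by blast

lemma S4: "Ag f - Cg (q (J f)) \<in> I1"
  apply (rule ideal_gen)
  unfolding ssr_relations_def fa_diff_eq[symmetric] by blast

lemma S1n: "Cg (- u) + Cg u \<in> I1"
  using S1[of "-1" u 0 u] by (simp add: fa_smul_m1)

lemma S1a: "Cg (x + y) - (Cg x + Cg y) \<in> I1"
  using S1[of 1 x 1 y] by simp

definition phi :: "'h cgen \<Rightarrow> 'h cgen fsa" where
  "phi c = (case c of Cr f \<Rightarrow> Cg (P f) - Ag (P (g (J f))) | An f \<Rightarrow> Cg (P (J f)) + Ag (P f))"

lemma phi_Cr[simp]: "phi (Cr f) = Cg (P f) - Ag (P (g (J f)))" by (simp add: phi_def)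
lemma phi_An[simp]: "phi (An f) = Cg (P (J f)) + Ag (P f)" by (simp add: phi_def)

lemma phi_A2: "phi c \<in> free_star_alg G2"
  by (cases c) (auto intro!: fsa_add fsa_diff C_A2 A_A2)

lemma A1_UNIV: "x \<in> free_star_alg (UNIV :: 'h cgen set)"  if "x \<in> free_star_alg G2" for x
  using fsa_mono[OF _ that] by blast

lemma fext_phi_Cr[simp]: "fext phi (Cg f) = Cg (P f) - Ag (P (g (J f)))"
  by (simp only: fext_gen phi_Cr)
lemma fext_phi_An[simp]: "fext phi (Ag f) = Cg (P (J f)) + Ag (P f)"
  by (simp only: fext_gen phi_An)

text \<open>Part A: the SSR relations are mapped into the CSR ideal\<close>

lemma partA1: "fext phi (Cg (smul c1 f1 + smul c2 f2) - (fa_smul c1 (Cg f1) + fa_smul c2 (Cg f2))) \<in> I2"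
proof -
  let ?x1 = "P f1" and ?x2 = "P f2" and ?y1 = "P (g (J f1))" and ?y2 = "P (g (J f2))"
  have e: "fext phi (Cg (smul c1 f1 + smul c2 f2) - (fa_smul c1 (Cg f1) + fa_smul c2 (Cg f2))) =
    (Cg (smul c1 ?x1 + smul c2 ?x2) - (fa_smul c1 (Cg ?x1) + fa_smul c2 (Cg ?x2))) -
    (Ag (smul (cnj c1) ?y1 + smul (cnj c2) ?y2) - (fa_smul (cnj (cnj c1)) (Ag ?y1) + fa_smul (cnj (cnj c2)) (Ag ?y2)))"
    by (simp add: fext_simps I1 I2) (rule ext, simp add: fa_smul_def algebra_simps)
  show ?thesis unfolding e
    by (intro ideal_diff K1 K3) auto
qed

lemma partA2: "fext phi (Cg f - fa_star (Ag (q f))) \<in> I2"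
proof -
  let ?y = "P (g (J f))" and ?x = "P f"
  have y: "?y \<in> range P" and x: "?x \<in> range P" and my: "- ?y \<in> range P"
    by (auto simp: rangeP_iff PA.minus)
  have e: "fext phi (Cg f - fa_star (Ag (q f))) =
     (Cg ?x - fa_star (Ag ?x)) + (Ag (- ?y) - fa_star (Cg (- ?y))) - (Ag (- ?y) + Ag ?y)"
    by (simp add: fext_simps I3 I4 fa_star_add)
  show ?thesis unfolding e
    by (intro ideal_diff ideal_add K2 K2' K3n x y my)
qed

lemma partA4: "fext phi (Ag f - Cg (q (J f))) \<in> I2"
proof -
  have e: "fext phi (Ag f - Cg (q (J f))) = Ag (- P f) + Ag (P f)"
    by (simp add: fext_simps I3 I5)
  show ?thesis unfolding e by (rule K3n) simp
qed

lemma partA3: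
  assumes a: "homog H0 H1 a f1" and b: "homog H0 H1 b f2"
  shows "fext phi (fa_mult (Ag f1) (Cg f2) - fa_smul (ssign a b) (fa_mult (Cg f2) (Ag f1))
          - fa_smul (ip f1 f2) fa_one) \<in> I2"
proof -
  let ?s = "ssign a b"
  let ?x1 = "P (J f1)" and ?y1 = "P f1" and ?x2 = "P f2" and ?y2 = "P (g (J f2))"
  have r: "?x1 \<in> range P" "?y1 \<in> range P" "?x2 \<in> range P" "?y2 \<in> range P" by auto
  have hx1: "homog H0 H1 a ?x1" by (rule homog_P[OF homog_J[OF a]])
  have hy1: "homog H0 H1 a ?y1" by (rule homog_P[OF a])
  have hx2: "homog H0 H1 b ?x2" by (rule homog_P[OF b])
  have hy2: "homog H0 H1 b ?y2" by (rule homog_P[OF homog_gg[OF homog_J[OF b]]])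
  define T1 where "T1 = fa_mult (Cg ?x1) (Cg ?x2) - fa_smul ?s (fa_mult (Cg ?x2) (Cg ?x1))"
  define T2 where "T2 = fa_mult (Ag ?y2) (Cg ?x1) - fa_smul ?s (fa_mult (Cg ?x1) (Ag ?y2)) - fa_smul (ip ?y2 ?x1) fa_one"
  define T3 where "T3 = fa_mult (Ag ?y1) (Cg ?x2) - fa_smul ?s (fa_mult (Cg ?x2) (Ag ?y1)) - fa_smul (ip ?y1 ?x2) fa_one"
  define T4 where "T4 = fa_mult (Ag ?y1) (Ag ?y2) - fa_smul ?s (fa_mult (Ag ?y2) (Ag ?y1))"
  have T2: "T2 \<in> I2" unfolding T2_def using K4[OF r(4) r(1) hy2 hx1] by (simp add: ssign_sym)
  have T3: "T3 \<in> I2" unfolding T3_def by (rule K4[OF r(2) r(3) hy1 hx2])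
  have T4: "T4 \<in> I2" unfolding T4_def by (rule K5[OF r(2) r(4) hy1 hy2])
  have T1: "T1 \<in> I2"
  proof -
    have Z: "fa_mult (fa_star (Ag ?x1)) (fa_star (Ag ?x2)) - fa_smul ?s (fa_mult (fa_star (Ag ?x2)) (fa_star (Ag ?x1))) \<in> I2"
      using ideal_star[OF K5[OF r(3) r(1) hx2 hx1]]
      by (simp add: fa_star_diff fa_star_smul fa_star_mult ssign_sym)
    have c1: "eqv I2 (Cg ?x1) (fa_star (Ag ?x1))" and c2: "eqv I2 (Cg ?x2) (fa_star (Ag ?x2))"
      using K2 r by (auto simp: eqv_def)
    have "eqv I2 T1 (fa_mult (fa_star (Ag ?x1)) (fa_star (Ag ?x2)) - fa_smul ?s (fa_mult (fa_star (Ag ?x2)) (fa_star (Ag ?x1))))"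
      unfolding T1_def
      by (intro eqv_diff eqv_smul eqv_mult c1 c2 fsa_star A_A2 C_A2 r)
    then show ?thesis using Z by (rule eqv_in)
  qed
  have sc: "ip f1 f2 = ip ?y1 ?x2 + ?s * ip ?y2 ?x1" using I6[OF a b] by simp
  have ss: "?s = 1 \<or> ?s = -1" by (simp add: ssign_def)
  have e: "fext phi (fa_mult (Ag f1) (Cg f2) - fa_smul ?s (fa_mult (Cg f2) (Ag f1))
          - fa_smul (ip f1 f2) fa_one) = T1 + fa_smul ?s T2 + T3 - T4"
    unfolding sc T1_def T2_def T3_def T4_def
    apply (simp add: fext_simps fa_mult_add_left fa_mult_add_right fa_mult_diff_left fa_mult_diff_right)
    apply (rule ext)
    using ss apply (auto simp: fa_smul_def algebra_simps)
    done
  show ?thesis unfolding e using T1 T2 T3 T4 by (intro ideal_add ideal_diff ideal_smul)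
qed

lemma partA: "r \<in> R1 \<Longrightarrow> fext phi r \<in> I2"
  unfolding ssr_relations_def fa_diff_eq fa_add_eq
  using partA1 partA2 partA3 partA4 by blast

lemma R1_A1: "R1 \<subseteq> free_star_alg UNIV"
  unfolding ssr_relations_def fa_diff_eq fa_add_eq
  by (auto intro!: fsa_diff fsa_add fsa_smul fsa_mult fsa_star fsa_one gen_A1)

lemma partB4:
  assumes f1: "f1 \<in> range P" and f2: "f2 \<in> range P"
    and a: "homog H0 H1 a f1" and b: "homog H0 H1 b f2"
  shows "fa_mult (Ag f1) (Ag f2) - fa_smul (ssign a b) (fa_mult (Ag f2) (Ag f1)) \<in> I1"
proof -
  let ?z = "q (J f2)"
  have P1: "P f1 = f1" and P2: "P f2 = f2" using f1 f2 by (auto simp: rangeP_iff)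
  have hz: "homog H0 H1 b ?z" unfolding I8a[OF P2] by (rule homog_neg[OF homog_gg[OF homog_J[OF b]]])
  have ipz: "ip f1 ?z = 0" by (rule I8b[OF P1 P2])
  have X: "fa_mult (Ag f1) (Cg ?z) - fa_smul (ssign a b) (fa_mult (Cg ?z) (Ag f1)) - fa_smul (ip f1 ?z) fa_one \<in> I1"
    by (rule S3[OF a hz])
  have e: "fa_mult (Ag f1) (Ag f2) - fa_smul (ssign a b) (fa_mult (Ag f2) (Ag f1)) =
     fa_mult (Ag f1) (Ag f2 - Cg ?z) - fa_smul (ssign a b) (fa_mult (Ag f2 - Cg ?z) (Ag f1)) +
     (fa_mult (Ag f1) (Cg ?z) - fa_smul (ssign a b) (fa_mult (Cg ?z) (Ag f1)) - fa_smul (ip f1 ?z) fa_one)"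
    unfolding ipz by (simp add: fa_mult_diff_left fa_mult_diff_right fa_smul_diff)
  show ?thesis unfolding e
    by (intro ideal_add ideal_diff ideal_smul ideal_multl ideal_multr S4 X gen_A1)
qed

lemma partB: "r \<in> R2 \<Longrightarrow> r \<in> I1"
proof -
  assume r: "r \<in> R2"
  have R1sub: "r \<in> R1 \<Longrightarrow> r \<in> I1" by (rule ideal_gen)
  show ?thesis using r unfolding csr_relations_def
  proof (elim UnE)
    assume "r \<in> {fa_diff (fa_gen (Cr (smul c1 f1 + smul c2 f2)))
              (fa_add (fa_smul c1 (fa_gen (Cr f1))) (fa_smul c2 (fa_gen (Cr f2))))
        | c1 c2 f1 f2. f1 \<in> range P \<and> f2 \<in> range P}"
    then show ?thesis by (intro R1sub) (unfold ssr_relations_def, blast)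
  next
    assume "r \<in> {fa_diff (fa_gen (Cr f)) (fa_star (fa_gen (An f))) | f. f \<in> range P}"
    then obtain f where "f \<in> range P" "r = fa_diff (fa_gen (Cr f)) (fa_star (fa_gen (An (q f))))"
      by (auto simp: I7 rangeP_iff)
    then show ?thesis by (intro R1sub) (unfold ssr_relations_def, blast)
  next
    assume "r \<in> {fa_diff (fa_diff (fa_mult (fa_gen (An f1)) (fa_gen (Cr f2)))
                       (fa_smul (ssign a b) (fa_mult (fa_gen (Cr f2)) (fa_gen (An f1)))))
              (fa_smul (ip f1 f2) fa_one)
        | a b f1 f2. f1 \<in> range P \<and> f2 \<in> range P \<and> homog H0 H1 a f1 \<and> homog H0 H1 b f2}"
    then show ?thesis by (intro R1sub) (unfold ssr_relations_def, blast)
  next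
    assume "r \<in> {fa_diff (fa_mult (fa_gen (An f1)) (fa_gen (An f2)))
              (fa_smul (ssign a b) (fa_mult (fa_gen (An f2)) (fa_gen (An f1))))
        | a b f1 f2. f1 \<in> range P \<and> f2 \<in> range P \<and> homog H0 H1 a f1 \<and> homog H0 H1 b f2}"
    then show ?thesis using partB4 by (auto simp: fa_diff_eq)
  qed
qed

lemma I2_sub_I1: "x \<in> I2 \<Longrightarrow> x \<in> I1"
proof (induct x rule: star_ideal.induct)
  case (gen r) then show ?case by (rule partB)
next
  case zero then show ?case by (rule star_ideal.zero)
next
  case (add x y) show ?case using add(2,4) by (rule star_ideal.add)
next
  case (smul x c) show ?case using smul(2) by (rule star_ideal.smul)
next
  case (star x) show ?case using star(2) by (rule star_ideal.star)
next
  case (multl x a) show ?case using multl(2) A1_UNIV[OF multl(3)] by (rule star_ideal.multl)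
next
  case (multr x a) show ?case using multr(2) A1_UNIV[OF multr(3)] by (rule star_ideal.multr)
qed

lemma partC: "phi c - fa_gen c \<in> I1"
proof (cases c)
  case (Cr f)
  let ?y = "P (g (J f))" and ?u = "f - P f"
  have X1: "Ag ?y - Cg (- ?u) \<in> I1" using S4[of ?y] by (simp add: I9)
  have X2: "Cg (- ?u) + Cg ?u \<in> I1" by (rule S1n)
  have X3: "Cg f - (Cg (P f) + Cg ?u) \<in> I1" using S1a[of "P f" ?u] by simp
  have e: "phi c - fa_gen c = - (Ag ?y - Cg (- ?u)) - (Cg (- ?u) + Cg ?u) - (Cg f - (Cg (P f) + Cg ?u))"
    by (simp add: Cr, (rule ext, simp add: algebra_simps)?)
  show ?thesis unfolding e by (intro ideal_diff ideal_uminus X1 X2 X3)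
next
  case (An f)
  have X1: "Ag (P f) - Cg (q (J (P f))) \<in> I1" by (rule S4)
  have X2: "Ag f - Cg (q (J f)) \<in> I1" by (rule S4)
  have X3: "Cg (q (J f)) - (Cg (P (J f)) + Cg (q (J (P f)))) \<in> I1" using S1a[of "P (J f)" "q (J (P f))"] by (simp add: I10[symmetric])
  have e: "phi c - fa_gen c = (Ag (P f) - Cg (q (J (P f)))) - (Ag f - Cg (q (J f))) - (Cg (q (J f)) - (Cg (P (J f)) + Cg (q (J (P f)))))"
    by (simp add: An, (rule ext, simp add: algebra_simps)?)
  show ?thesis unfolding e by (intro ideal_diff X1 X2 X3)
qed

lemma partD: "c \<in> G2 \<Longrightarrow> phi c - fa_gen c \<in> I2"
proof -
  assume "c \<in> G2"
  then obtain f where f: "f \<in> range P" and c: "c = Cr f \<or> c = An f" by (auto simp: csr_gens_def)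
  have Pf: "P f = f" using f by (simp add: rangeP_iff)
  show ?thesis
  proof (cases "c = Cr f")
    case True
    have "phi c - fa_gen c = - Ag 0" using Pf by (simp add: True I11)
    then show ?thesis using ideal_uminus[OF A0] by simp
  next
    case False
    then have cA: "c = An f" using c by simp
    have "phi c - fa_gen c = Cg 0" using Pf by (simp add: cA PJ0)
    then show ?thesis using C0 by simp
  qed
qed

lemma main: "quot_star_isomorphic (UNIV :: 'h cgen set) I1 G2 I2"
proof -
  let ?F = "fext phi"
  have z: "fa_diff u u \<in> I2" for u by (simp add: fa_diff_eq ideal_zero)
  have h1: "\<forall>x\<in>free_star_alg UNIV. ?F x \<in> free_star_alg G2"
    using fsa_fext phi_A2 by blast
  have h2: "\<forall>x\<in>free_star_alg UNIV. \<forall>y\<in>free_star_alg UNIV.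
             fa_diff (?F (fa_add x y)) (fa_add (?F x) (?F y)) \<in> I2"
    by (simp add: fsa_UNIV fa_add_eq fext_add z)
  have h3: "\<forall>c. \<forall>x\<in>free_star_alg UNIV. fa_diff (?F (fa_smul c x)) (fa_smul c (?F x)) \<in> I2"
    by (simp add: fsa_UNIV fext_smul z)
  have h4: "\<forall>x\<in>free_star_alg UNIV. \<forall>y\<in>free_star_alg UNIV.
             fa_diff (?F (fa_mult x y)) (fa_mult (?F x) (?F y)) \<in> I2"
    by (simp add: fsa_UNIV fext_mult z)
  have h5: "\<forall>x\<in>free_star_alg UNIV. fa_diff (?F (fa_star x)) (fa_star (?F x)) \<in> I2"
    by (simp add: fsa_UNIV fext_star z)
  have h6: "fa_diff (?F fa_one) fa_one \<in> I2"
    by (simp add: z)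
  have h7: "\<forall>x\<in>free_star_alg UNIV. ?F x \<in> I2 \<longleftrightarrow> x \<in> I1"
  proof (intro ballI iffI)
    fix x assume x: "x \<in> free_star_alg (UNIV :: 'h cgen set)"
    {
      assume "?F x \<in> I2"
      then have a: "?F x \<in> I1" by (rule I2_sub_I1)
      have b: "?F x - x \<in> I1"
        by (rule fext_approx[OF _ _ x]) (auto intro: A1_UNIV phi_A2 partC)
      have "x = ?F x - (?F x - x)" by simp
      then show "x \<in> I1" using ideal_diff[OF a b] by simp
    }
    {
      assume "x \<in> I1"
      then show "?F x \<in> I2"
        apply -
        apply (rule fext_maps_ideal)
           apply (rule R1_A1)
          apply (rule phi_A2)
         apply (erule partA)
        apply assumption
        done
    }
  qed
  have h8: "\<forall>y\<in>free_star_alg G2. \<exists>x\<in>free_star_alg UNIV. fa_diff (?F x) y \<in> I2"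
  proof
    fix y assume y: "y \<in> free_star_alg G2"
    have "?F y - y \<in> I2"
      by (rule fext_approx[OF _ _ y]) (auto intro: phi_A2 partD)
    then show "\<exists>x\<in>free_star_alg UNIV. fa_diff (?F x) y \<in> I2"
      using A1_UNIV[OF y] by (auto simp: fa_diff_eq)
  qed
  show ?thesis unfolding quot_star_isomorphic_def
    by (rule exI[of _ ?F]) (intro conjI h1 h2 h3 h4 h5 h6 h7 h8)
qed

end

theorem lemma1:
  fixes smul :: "complex \<Rightarrow> 'h::ab_group_add \<Rightarrow> 'h"
    and ip :: "'h \<Rightarrow> 'h \<Rightarrow> complex"
    and H0 H1 :: "'h set"
    and J P :: "'h \<Rightarrow> 'h"
  assumes "graded_hilbert smul ip H0 H1"
    and "even_conjugation smul ip H0 H1 J"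
    and "even_orth_projection smul ip H0 H1 P"
    and "\<forall>x. J (P x) = J x - P (J x)"
  shows "quot_star_isomorphic
           (UNIV :: 'h cgen set) (star_ideal UNIV (ssr_relations smul ip H0 H1 J P))
           (csr_gens P) (star_ideal (csr_gens P) (csr_relations smul ip H0 H1 P))"
proof -
  interpret S: setting smul ip H0 H1 J P using assms by unfold_locales
  show ?thesis by (rule S.main)
qed


end
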